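(* Let $\mathcal T$ be a triangulation of type I of the punctured disc, with associated cluster-tilted algebra $\mathrm B$, and with colored points labelled $r_1,\dots,r_{m+d}$ and $b_1,\dots,b_{m+d}$ as described in the context. Let $i\in\{1,\dots,m+d\}$ (indices modulo $m+d$). Then (a) $M(r_i,b_{i+1})$ is projective (possibly zero); (b) $M(r_i,b_i)$ is projective (possibly zero), or there exists an arc $\overline{k}=\gamma(q,s)$ of $\mathcal T$ (the side opposite the puncture of an internal triangle of $\mathcal T$ whose two other sides $k,k+1$ are incident to the puncture) such that $M(r_i,b_i)=M_{\gamma(q,\tau^{-1}(s))}$.
   Context: Let $D$ be a disc with $n$ marked points on the boundary and one puncture in the interior; $\mathcal T$ is a triangulation of $D$ by tagged arcs (a maximal set of pairwise compatible tagged arcs). An arc incident to the puncture gives two tagged arcs, plain and notched ($\alpha$ and $\alpha^{\Join}$). For a boundary marked point $q$, $\tau(q)$ is the next marked point in clockwise direction. For boundary marked points $q\neq s$ with $s\ne\tau(q)$, $\gamma(q,s)$ denotes the arc from $q$ to $s$ going around the puncture in clockwise direction, i.e. isotopic (in $D$ minus the puncture) to the clockwise boundary path from $q$ to $s$; if $s=\tau(q)$ this is a boundary segment. $\gamma(q,q)$ and $\gamma^{\Join}(q,q)$ denote the plain and notched arcs from $q$ to the puncture. Let $\mathcal C$ be the cluster category of type $\mathbb D_n$, whose indecomposable objects $X_\gamma$ correspond bijectively to tagged arcs $\gamma$, with Auslander–Reiten translation $\tau X_\gamma=X_{\tau(\gamma)}$ where $\tau(\gamma)$ is obtained by moving both endpoints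 on the boundary to their clockwise neighbours and changing the tag at the puncture. Let $T=\bigoplus_{a\in\mathcal T}T_a$ with $T_a=\tau^{-1}X_a$, a cluster-tilting object, and $\mathrm B=\mathrm{End}_{\mathcal C}(T)$, the cluster-tilted algebra; its vertices are indexed by arcs of $\mathcal T$. For a tagged arc $\gamma$ let $M_\gamma=\mathrm{Hom}_{\mathcal C}(T,X_\gamma)$; this is $0$ if $\gamma\in\mathcal T$ and indecomposable otherwise, and $M_{\tau^{-1}(a)}=P(a)$, $M_{\tau(a)}=I(a)$ for $a\in\mathcal T$; $\tau$ on modules is the AR translation of $\mathrm{mod}\,\mathrm B$. Two arcs incident to the puncture are consecutive if their boundary endpoints are $q$ and $\tau(q)$. $\mathcal T$ is of type I if it contains at least three tagged arcs incident to the puncture, or two plain non-consecutive arcs incident to the puncture. A boundary point is adjacent to the puncture if it is an endpoint of an arc of $\mathcal T$ incident to the puncture. Label the $m$ arcs of $\mathcal T$ incident to the puncture $1,\dots,m$ in clockwise order (indices mod $m$). A triangle of $\mathcal T$ is internal if none of its sides is a boundary segment. If arcs $k,k+1$ are two sides of an internal triangle $\Delta$, its third side is labelled $\overline{k}$; the first vertex of $\Delta$ is the boundary endpoint of $k$ and its last vertex the boundary endpoint of $k+1$. Let $\mathcal E$ be the set of internal triangles having the puncture as a vertex; two are consecutive if they share an edge. If all triangles at the puncture are internal, set $d=m$. Otherwise decompose $\mathcal E=\mathcal E_1\cup\dots\cup\mathcal E_l$ into maximal sets $\mathcal E_i=\{\Delta^i_1,\dots,\Delta^i_{t_i}\}$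 of consecutive triangles, where $\Delta^i_{j+1}$ follows $\Delta^i_j$ in clockwise order (so $\Delta^i_1$ is the first and $\Delta^i_{t_i}$ the last triangle of $\mathcal E_i$), and set $d=\sum_i(|\mathcal E_i|-1)$ ($d=0$ if $\mathcal E=\emptyset$). A boundary marked point $q$ is colored if $q$ or $\tau(q)$ is adjacent to the puncture. A colored point $q$ is red if $\tau(q)$ is not the last vertex of the last triangle of some $\mathcal E_i$, and blue if $q$ is not the first vertex of the first triangle of some $\mathcal E_i$. There are $m+d$ red and $m+d$ blue points. Labels $r_1,\dots,r_{m+d}$ are assigned to red points and $b_1,\dots,b_{m+d}$ to blue points, each following the clockwise order along the boundary, starting as follows: (1) if $\mathcal E=\emptyset$, an arbitrary red-and-blue point gets labels $r_1$ and $b_1$; (2) if all triangles at the puncture are internal, an arbitrary red-and-blue point gets labels $r_1$ and $b_{m+d}$; (3) otherwise, with $q$ the first vertex of the first triangle of $\mathcal E_1$, the point $\tau^{-1}(q)$ gets labels $r_1,b_1$ and $q$ gets label $r_2$. Indices of $r,b$ are taken modulo $m+d$. For labels $r_i,b_j$: if they lie on different points $q$ (labelled $r_i$) and $s$ (labelled $b_j$), $M(r_i,b_j)=M_{\gamma(q,s)}$ if $\gamma(q,s)$ is an arc not in $\mathcal T$, and $M(r_i,b_j)=0$ otherwise (in particular if $\gamma(q,s)\in\mathcal T$ or is a boundary segment); if they lie on the same point $q$, then $M(r_i,b_j)=M_{\gamma^{\Join}(q,q)}$ if $\gamma(q,q)\in\mathcal T$, and $M(r_i,b_j)=M_{\gamma(q,q)}$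 otherwise. *)

theory Defs
  imports Main
begin

text \<open>Combinatorial model of the once-punctured disc with n boundary marked
points 0,...,n-1, numbered in clockwise order.  tau q is the clockwise
neighbour of q.\<close>

definition cw :: "nat \<Rightarrow> nat \<Rightarrow> nat" where
  "cw n q = (q + 1) mod n"

definition ccw :: "nat \<Rightarrow> nat \<Rightarrow> nat" where
  "ccw n q = (q + n - 1) mod n"

definition cwlen :: "nat \<Rightarrow> nat \<Rightarrow> nat \<Rightarrow> nat" where
  "cwlen n q s = (s + n - q) mod n"

text \<open>Tagged arcs: Bd q s is gamma(q,s) (the arc from q to s isotopic to the
clockwise boundary path from q to s); Pl q / Nt q are the plain / notched arcs
from q to the puncture.\<close>
datatype tarc = Bd nat nat | Pl nat | Nt nat

fun valid_arc :: "nat \<Rightarrow> tarc \<Rightarrow> bool" where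
  "valid_arc n (Bd q s) = (q < n \<and> s < n \<and> q \<noteq> s \<and> s \<noteq> cw n q)"
| "valid_arc n (Pl q) = (q < n)"
| "valid_arc n (Nt q) = (q < n)"

fun tau_arc :: "nat \<Rightarrow> tarc \<Rightarrow> tarc" where
  "tau_arc n (Bd q s) = Bd (cw n q) (cw n s)"
| "tau_arc n (Pl q) = Nt (cw n q)"
| "tau_arc n (Nt q) = Pl (cw n q)"

fun tau_inv_arc :: "nat \<Rightarrow> tarc \<Rightarrow> tarc" where
  "tau_inv_arc n (Bd q s) = Bd (ccw n q) (ccw n s)"
| "tau_inv_arc n (Pl q) = Nt (ccw n q)"
| "tau_inv_arc n (Nt q) = Pl (ccw n q)"

text \<open>Compatibility (non-crossing) of two arcs between boundary points:
the puncture-free sides (clockwise boundary intervals) are nested or have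
disjoint interiors.\<close>
definition bd_compat :: "nat \<Rightarrow> nat \<Rightarrow> nat \<Rightarrow> nat \<Rightarrow> nat \<Rightarrow> bool" where
  "bd_compat n q s q' s' =
     (cwlen n q' q + cwlen n q s \<le> cwlen n q' s'
      \<or> cwlen n q q' + cwlen n q' s' \<le> cwlen n q s
      \<or> (cwlen n q q' \<ge> cwlen n q s \<and> cwlen n q' q \<ge> cwlen n q' s'))"

text \<open>An arc from p to the puncture does not cross gamma(q,s) iff p is not
strictly inside the clockwise interval from q to s.\<close>
definition punct_compat :: "nat \<Rightarrow> nat \<Rightarrow> nat \<Rightarrow> nat \<Rightarrow> bool" where
  "punct_compat n p q s = (\<not> (0 < cwlen n q p \<and> cwlen n q p < cwlen n q s))"

fun compat :: "nat \<Rightarrow> tarc \<Rightarrow> tarc \<Rightarrow> bool" where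
  "compat n (Bd q s) (Bd q' s') = bd_compat n q s q' s'"
| "compat n (Bd q s) (Pl p) = punct_compat n p q s"
| "compat n (Bd q s) (Nt p) = punct_compat n p q s"
| "compat n (Pl p) (Bd q s) = punct_compat n p q s"
| "compat n (Nt p) (Bd q s) = punct_compat n p q s"
| "compat n (Pl p) (Pl p') = True"
| "compat n (Nt p) (Nt p') = True"
| "compat n (Pl p) (Nt p') = (p = p')"
| "compat n (Nt p) (Pl p') = (p = p')"

definition triangulation :: "nat \<Rightarrow> tarc set \<Rightarrow> bool" where
  "triangulation n T =
     ((\<forall>x\<in>T. valid_arc n x) \<and> (\<forall>x\<in>T. \<forall>y\<in>T. compat n x y)
      \<and> (\<forall>x. valid_arc n x \<and> (\<forall>y\<in>T. compat n x y) \<longrightarrow> x \<in> T))"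

fun is_punct :: "tarc \<Rightarrow> bool" where
  "is_punct (Bd q s) = False"
| "is_punct (Pl q) = True"
| "is_punct (Nt q) = True"

definition typeI :: "nat \<Rightarrow> tarc set \<Rightarrow> bool" where
  "typeI n T =
     (card {x\<in>T. is_punct x} \<ge> 3
      \<or> (\<exists>q q'. Pl q \<in> T \<and> Pl q' \<in> T \<and> q \<noteq> q' \<and> q' \<noteq> cw n q \<and> q \<noteq> cw n q'))"

definition adj :: "tarc set \<Rightarrow> nat set" where
  "adj T = {q. Pl q \<in> T \<or> Nt q \<in> T}"

definition cw_next :: "nat \<Rightarrow> nat set \<Rightarrow> nat \<Rightarrow> nat" where
  "cw_next n S p = (p + (LEAST k. 0 < k \<and> (p + k) mod n \<in> S)) mod n"

definition cw_prev :: "nat \<Rightarrow> nat set \<Rightarrow> nat \<Rightarrow> nat" where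
  "cw_prev n S p = (p + n - (LEAST k. 0 < k \<and> k \<le> n \<and> (p + n - k) mod n \<in> S)) mod n"

text \<open>Internal triangles at the puncture, indexed by their first vertex p
(the boundary endpoint of arc k; the last vertex is cw_next n (adj T) p).\<close>
definition intE :: "nat \<Rightarrow> tarc set \<Rightarrow> nat set" where
  "intE n T = {p \<in> adj T. cw_next n (adj T) p \<noteq> cw n p}"

text \<open>First vertices of first triangles of the maximal runs E_i.\<close>
definition run_starts :: "nat \<Rightarrow> tarc set \<Rightarrow> nat set" where
  "run_starts n T = {p \<in> intE n T. cw_prev n (adj T) p \<notin> intE n T}"

text \<open>Last vertices of last triangles of the maximal runs E_i.\<close>
definition run_last_vertices :: "nat \<Rightarrow> tarc set \<Rightarrow> nat set" where
  "run_last_vertices n T =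
     {cw_next n (adj T) p | p. p \<in> intE n T \<and> cw_next n (adj T) p \<notin> intE n T}"

definition dval :: "nat \<Rightarrow> tarc set \<Rightarrow> nat" where
  "dval n T = (if intE n T = adj T then card (adj T)
               else card (intE n T) - card (run_starts n T))"

definition NN :: "nat \<Rightarrow> tarc set \<Rightarrow> nat" where
  "NN n T = card (adj T) + dval n T"

definition colored :: "nat \<Rightarrow> tarc set \<Rightarrow> nat set" where
  "colored n T = {q. q < n \<and> (q \<in> adj T \<or> cw n q \<in> adj T)}"

definition red :: "nat \<Rightarrow> tarc set \<Rightarrow> nat set" where
  "red n T = {q \<in> colored n T. cw n q \<notin> run_last_vertices n T}"

definition blue :: "nat \<Rightarrow> tarc set \<Rightarrow> nat set" where
  "blue n T = {q \<in> colored n T. q \<notin> run_starts n T}"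

text \<open>Labelling: rl j is the point carrying label r_j, bl j the point
carrying b_j (j in 1..m+d), following the clockwise order from the
prescribed starting labels.\<close>
definition labelling :: "nat \<Rightarrow> tarc set \<Rightarrow> (nat \<Rightarrow> nat) \<Rightarrow> (nat \<Rightarrow> nat) \<Rightarrow> bool" where
  "labelling n T rl bl =
     (let N = NN n T; R = red n T; B = blue n T in
      \<exists>rs bs kb.
        (\<forall>j\<in>{1..N}. rl j = (cw_next n R ^^ ((j + N - 1) mod N)) rs
                   \<and> bl j = (cw_next n B ^^ ((j + N - kb) mod N)) bs)
        \<and> (if intE n T = {} then rs = bs \<and> rs \<in> R \<inter> B \<and> kb = 1
           else if intE n T = adj T then rs = bs \<and> rs \<in> R \<inter> B \<and> kb = N
           else (\<exists>q\<in>run_starts n T. rs = ccw n q \<and> bs = ccw n q \<and> kb = 1)))"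

text \<open>Modules M_gamma = Hom(T, X_gamma): None is the zero module, Some gamma
the indecomposable M_gamma (gamma not in T).\<close>
definition Mmod :: "tarc set \<Rightarrow> tarc \<Rightarrow> tarc option" where
  "Mmod T \<gamma> = (if \<gamma> \<in> T then None else Some \<gamma>)"

definition Mrb :: "nat \<Rightarrow> tarc set \<Rightarrow> (nat \<Rightarrow> nat) \<Rightarrow> (nat \<Rightarrow> nat) \<Rightarrow> nat \<Rightarrow> nat \<Rightarrow> tarc option" where
  "Mrb n T rl bl i j =
     (let q = rl i; s = bl j in
      if q \<noteq> s then (if s = cw n q then None else Mmod T (Bd q s))
      else (if Pl q \<in> T then Mmod T (Nt q) else Mmod T (Pl q)))"

text \<open>Projective (possibly zero): zero, or isomorphic to an indecomposable
projective P(a) = M_{tau^{-1}(a)}, a in T.\<close>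
definition projective_mod :: "nat \<Rightarrow> tarc set \<Rightarrow> tarc option \<Rightarrow> bool" where
  "projective_mod n T M = (M = None \<or> (\<exists>a\<in>T. M = Mmod T (tau_inv_arc n a) \<and> M \<noteq> None))"

end

theory Submission
  imports Defs
begin


lemma cw_lt: "0 < n \<Longrightarrow> cw n q < n" by (simp add: cw_def)
lemma ccw_lt: "0 < n \<Longrightarrow> ccw n q < n" by (simp add: ccw_def)
lemma cw_ccw: "q < n \<Longrightarrow> cw n (ccw n q) = q"
proof (cases q)
  case 0
  assume "q < n" then show ?thesis using 0 by (cases n) (auto simp: cw_def ccw_def)
next
  case (Suc k)
  assume "q < n" then show ?thesis using Suc by (simp add: mod_Suc_eq cw_def ccw_def)
qed
lemma ccw_cw: "q < n \<Longrightarrow> ccw n (cw n q) = q"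
proof (cases "Suc q = n")
  case True then show ?thesis by (simp add: cw_def ccw_def)
next
  case False
  assume "q < n" then show ?thesis using False by (simp add: cw_def ccw_def)
qed


lemma mod_sub_shift: "j \<le> (n::nat) \<Longrightarrow> (x mod n + n - j) mod n = (x + (n - j)) mod n"
proof -
  assume "j \<le> n"
  then have "x mod n + n - j = x mod n + (n - j)" by simp
  then show ?thesis by (simp only: mod_add_left_eq)
qed

lemma cwlen_lt: "0 < n \<Longrightarrow> cwlen n p q < n" by (simp add: cwlen_def)

lemma cwlen_add: "p < n \<Longrightarrow> q < n \<Longrightarrow> (p + cwlen n p q) mod n = q"
proof -
  assume a: "p < n" "q < n"
  have "(p + cwlen n p q) mod n = (p + (q + n - p)) mod n"
    unfolding cwlen_def by (simp add: mod_add_right_eq)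
  also have "p + (q + n - p) = q + n" using a by simp
  finally show ?thesis using a by simp
qed

lemma cwlen_of_add: "p < n \<Longrightarrow> d < n \<Longrightarrow> cwlen n p ((p + d) mod n) = d"
proof -
  assume a: "p < n" "d < n"
  have "cwlen n p ((p + d) mod n) = ((p + d) mod n + (n - p)) mod n"
    unfolding cwlen_def using a by (simp add: add_diff_assoc)
  also have "\<dots> = (p + d + (n - p)) mod n" by (simp add: mod_add_left_eq)
  also have "p + d + (n - p) = d + n" using a by simp
  finally show ?thesis using a by simp
qed

lemma cwlen_zero: "p < n \<Longrightarrow> q < n \<Longrightarrow> cwlen n p q = 0 \<longleftrightarrow> p = q"
  using cwlen_add[of p n q] by (auto simp: cwlen_def)

lemma next_ex:
  fixes n :: nat
  assumes "S \<subseteq> {..<n}" "s \<in> S" "p < n"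
  shows "\<exists>k. 0 < k \<and> (p + k) mod n \<in> S"
proof -
  have sn: "s < n" using assms by auto
  show ?thesis
  proof (cases "cwlen n p s = 0")
    case True
    then have "p = s" using cwlen_zero[OF assms(3) sn] by simp
    then show ?thesis using assms sn by (intro exI[of _ n]) auto
  next
    case False
    then show ?thesis using cwlen_add[OF assms(3) sn] assms by (intro exI[of _ "cwlen n p s"]) auto
  qed
qed

lemma next_le_n:
  fixes n :: nat
  assumes "S \<subseteq> {..<n}" "s \<in> S" "p < n"
  shows "(LEAST k. 0 < k \<and> (p + k) mod n \<in> S) \<le> n"
proof -
  have sn: "s < n" using assms by auto
  show ?thesis
  proof (cases "cwlen n p s = 0")
    case True
    then have "p = s" using cwlen_zero[OF assms(3) sn] by simp
    then show ?thesis using assms sn by (intro Least_le) auto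
  next
    case False
    then have "(LEAST k. 0 < k \<and> (p + k) mod n \<in> S) \<le> cwlen n p s"
      using cwlen_add[OF assms(3) sn] assms by (intro Least_le) auto
    then show ?thesis using cwlen_lt[of n p s] sn by linarith
  qed
qed

lemma next_props:
  assumes "S \<subseteq> {..<n}" "s \<in> S" "p < n"
  defines "K \<equiv> (LEAST k. 0 < k \<and> (p + k) mod n \<in> S)"
  shows "0 < K" "K \<le> n" "(p + K) mod n \<in> S" "\<And>j. 0 < j \<Longrightarrow> j < K \<Longrightarrow> (p + j) mod n \<notin> S"
    "cw_next n S p = (p + K) mod n"
proof -
  obtain k where k: "0 < k \<and> (p + k) mod n \<in> S" using next_ex[OF assms(1-3)] by blast
  show "0 < K" "(p + K) mod n \<in> S" unfolding K_def using LeastI[of "\<lambda>k. 0 < k \<and> (p + k) mod n \<in> S", OF k] by auto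
  show "K \<le> n" unfolding K_def using next_le_n[OF assms(1-3)] .
  show "\<And>j. 0 < j \<Longrightarrow> j < K \<Longrightarrow> (p + j) mod n \<notin> S" unfolding K_def using not_less_Least by blast
  show "cw_next n S p = (p + K) mod n" unfolding cw_next_def K_def ..
qed

lemma next_eqI:
  assumes "0 < k" "(p + k) mod n \<in> S" "\<And>j. 0 < j \<Longrightarrow> j < k \<Longrightarrow> (p + j) mod n \<notin> S"
  shows "cw_next n S p = (p + k) mod n"
proof -
  have "(LEAST k. 0 < k \<and> (p + k) mod n \<in> S) = k"
    by (rule Least_equality) (use assms in \<open>auto simp: not_less[symmetric]\<close>)
  then show ?thesis unfolding cw_next_def by simp
qed

lemma prev_ex:
  fixes n :: nat
  assumes "S \<subseteq> {..<n}" "s \<in> S" "p < n"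
  shows "\<exists>k. 0 < k \<and> k \<le> n \<and> (p + n - k) mod n \<in> S"
proof -
  have sn: "s < n" using assms by auto
  show ?thesis
  proof (cases "cwlen n s p = 0")
    case True
    then have "p = s" using cwlen_zero[OF sn assms(3)] by simp
    then show ?thesis using assms sn by (intro exI[of _ n]) auto
  next
    case False
    have c: "(s + cwlen n s p) mod n = p" using cwlen_add[OF sn assms(3)] .
    have lt: "cwlen n s p < n" using cwlen_lt[of n s p] sn by simp
    have "(p + n - cwlen n s p) mod n = s"
    proof -
      have "(p + n - cwlen n s p) mod n = ((s + cwlen n s p) mod n + n - cwlen n s p) mod n" using c by simp
      also have "\<dots> = (s + cwlen n s p + (n - cwlen n s p)) mod n" using lt by (simp add: mod_sub_shift)
      also have "s + cwlen n s p + (n - cwlen n s p) = s + n" using lt by simp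
      finally show ?thesis using sn by simp
    qed
    then show ?thesis using False lt assms by (intro exI[of _ "cwlen n s p"]) auto
  qed
qed

lemma prev_props:
  assumes "S \<subseteq> {..<n}" "s \<in> S" "p < n"
  defines "K \<equiv> (LEAST k. 0 < k \<and> k \<le> n \<and> (p + n - k) mod n \<in> S)"
  shows "0 < K" "K \<le> n" "(p + n - K) mod n \<in> S" "\<And>j. 0 < j \<Longrightarrow> j < K \<Longrightarrow> (p + n - j) mod n \<notin> S"
    "cw_prev n S p = (p + n - K) mod n"
proof -
  obtain k where k: "0 < k \<and> k \<le> n \<and> (p + n - k) mod n \<in> S" using prev_ex[OF assms(1-3)] by blast
  show "0 < K" "K \<le> n" "(p + n - K) mod n \<in> S" unfolding K_def using LeastI[of "\<lambda>k. 0 < k \<and> k \<le> n \<and> (p + n - k) mod n \<in> S", OF k] by auto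
  have Kk: "K \<le> k" unfolding K_def using k by (intro Least_le) auto
  show "\<And>j. 0 < j \<Longrightarrow> j < K \<Longrightarrow> (p + n - j) mod n \<notin> S"
  proof -
    fix j assume "0 < j" "j < K"
    then have "\<not> (0 < j \<and> j \<le> n \<and> (p + n - j) mod n \<in> S)" unfolding K_def using not_less_Least by blast
    then show "(p + n - j) mod n \<notin> S" using \<open>0<j\<close> \<open>j < K\<close> Kk k by auto
  qed
  show "cw_prev n S p = (p + n - K) mod n" unfolding cw_prev_def K_def ..
qed

lemma prev_eqI:
  assumes "0 < k" "k \<le> n" "(p + n - k) mod n \<in> S" "\<And>j. 0 < j \<Longrightarrow> j < k \<Longrightarrow> (p + n - j) mod n \<notin> S"
  shows "cw_prev n S p = (p + n - k) mod n"
proof -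
  have "(LEAST k. 0 < k \<and> k \<le> n \<and> (p + n - k) mod n \<in> S) = k"
    by (rule Least_equality) (use assms in \<open>auto simp: not_less[symmetric]\<close>)
  then show ?thesis unfolding cw_prev_def by simp
qed


lemma cwlen_if: "x < n \<Longrightarrow> y < n \<Longrightarrow> cwlen n x y = (if x \<le> y then y - x else y + n - x)"
  unfolding cwlen_def by (auto simp: mod_if)

lemma geo_core:
  fixes n al be si ab aq :: nat
  assumes "al < n" "be < n" "si < n" "al \<noteq> be" "0 < si"
    "al = 0 \<or> si \<le> al" "be = 0 \<or> si \<le> be"
    "ab = (if al \<le> be then be - al else be + n - al)"
    "aq = (if al = 0 then 0 else n - al)"
  shows "al + ab \<le> si \<or> aq + si \<le> ab \<or> (ab \<le> aq \<and> si \<le> al)"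
  using assms by (cases "al \<le> be"; cases "al = 0") auto

lemma cwlen_rel:
  assumes "a < n" "b < n" "q < n"
  shows "cwlen n a b = (if cwlen n q a \<le> cwlen n q b then cwlen n q b - cwlen n q a else cwlen n q b + n - cwlen n q a)"
  using assms by (cases "q \<le> a"; cases "q \<le> b"; cases "a \<le> b") (simp_all add: cwlen_if)

lemma cwlen_back:
  assumes "a < n" "q < n"
  shows "cwlen n a q = (if cwlen n q a = 0 then 0 else n - cwlen n q a)"
  using assms by (cases "q \<le> a"; cases "a \<le> q") (simp_all add: cwlen_if)

lemma geo:
  assumes "a < n" "b < n" "q < n" "s < n" "a \<noteq> b" "q \<noteq> s"
    "\<not> (0 < cwlen n q a \<and> cwlen n q a < cwlen n q s)"
    "\<not> (0 < cwlen n q b \<and> cwlen n q b < cwlen n q s)"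
  shows "bd_compat n a b q s"
proof -
  have ne: "cwlen n q a \<noteq> cwlen n q b" using cwlen_add[of q n a] cwlen_add[of q n b] assms by metis
  have si: "0 < cwlen n q s" using cwlen_zero[of q n s] assms by simp
  show ?thesis unfolding bd_compat_def
    apply (rule geo_core[of "cwlen n q a" n "cwlen n q b" "cwlen n q s"])
    using assms ne si cwlen_lt[of n] cwlen_rel[of a n b q] cwlen_back[of a n q] by auto
qed


lemma cw_mod: "0 < n \<Longrightarrow> cw n (x mod n) = (x + 1) mod n"
  unfolding cw_def by (simp add: mod_Suc_eq)

lemma ccw_inj: "x < n \<Longrightarrow> y < n \<Longrightarrow> ccw n x = ccw n y \<Longrightarrow> x = y"
  by (metis cw_ccw)
lemma cw_inj: "x < n \<Longrightarrow> y < n \<Longrightarrow> cw n x = cw n y \<Longrightarrow> x = y"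
  by (metis ccw_cw)

lemma prev_next:
  assumes S: "S \<subseteq> {..<n}" and a: "a \<in> S"
  shows "cw_prev n S (cw_next n S a) = a"
proof -
  have an: "a < n" using S a by auto
  define K where "K = (LEAST k. 0 < k \<and> (a + k) mod n \<in> S)"
  note P = next_props[OF S a an, folded K_def]
  have "cw_prev n S ((a + K) mod n) = ((a + K) mod n + n - K) mod n"
  proof (rule prev_eqI)
    show "0 < K" "K \<le> n" using P by auto
    have "((a + K) mod n + n - K) mod n = (a + K + (n - K)) mod n" using P(2) by (rule mod_sub_shift)
    also have "a + K + (n - K) = a + n" using P(2) by simp
    finally show "((a + K) mod n + n - K) mod n \<in> S" using a an by simp
    fix j assume j: "0 < j" "j < K"
    have "((a + K) mod n + n - j) mod n = (a + K + (n - j)) mod n" using j P(2) by (intro mod_sub_shift) simp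
    also have "a + K + (n - j) = a + (K - j) + n" using j P(2) by simp
    finally have "((a + K) mod n + n - j) mod n = (a + (K - j)) mod n" by simp
    then show "((a + K) mod n + n - j) mod n \<notin> S" using P(4)[of "K - j"] j by simp
  qed
  also have "((a + K) mod n + n - K) mod n = a"
  proof -
    have "((a + K) mod n + n - K) mod n = (a + K + (n - K)) mod n" using P(2) by (rule mod_sub_shift)
    also have "a + K + (n - K) = a + n" using P(2) by simp
    finally show ?thesis using an by simp
  qed
  finally show ?thesis using P(5) by simp
qed

lemma next_prev:
  assumes S: "S \<subseteq> {..<n}" and b: "b \<in> S"
  shows "cw_next n S (cw_prev n S b) = b"
proof -
  have bn: "b < n" using S b by auto
  define K where "K = (LEAST k. 0 < k \<and> k \<le> n \<and> (b + n - k) mod n \<in> S)"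
  note P = prev_props[OF S b bn, folded K_def]
  have e: "\<And>j. j \<le> K \<Longrightarrow> ((b + n - K) mod n + j) mod n = (b + n - (K - j)) mod n"
  proof -
    fix j assume "j \<le> K"
    then have "b + n - K + j = b + n - (K - j)" using P(2) by simp
    then show "((b + n - K) mod n + j) mod n = (b + n - (K - j)) mod n" by (simp add: mod_add_left_eq)
  qed
  have "cw_next n S ((b + n - K) mod n) = ((b + n - K) mod n + K) mod n"
  proof (rule next_eqI)
    show "0 < K" using P by auto
    show "((b + n - K) mod n + K) mod n \<in> S" using e[of K] b bn by simp
    fix j assume j: "0 < j" "j < K"
    then show "((b + n - K) mod n + j) mod n \<notin> S" using e[of j] P(4)[of "K - j"] by simp
  qed
  then show ?thesis using P(5) e[of K] bn by simp
qed

lemma next_in: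
  assumes S: "S \<subseteq> {..<n}" and s: "s \<in> S" and p: "p < n"
  shows "cw_next n S p \<in> S"
  using next_props[OF S s p] by simp

lemma prev_in:
  assumes S: "S \<subseteq> {..<n}" and s: "s \<in> S" and p: "p < n"
  shows "cw_prev n S p \<in> S"
  using prev_props[OF S s p] by simp


lemma orbit:
  assumes S: "S \<subseteq> {..<n}" and x: "x \<in> S"
  shows "s \<in> S \<Longrightarrow> \<exists>j. (cw_next n S ^^ j) x = s"
proof (induction "cwlen n x s" arbitrary: s rule: less_induct)
  case less
  have xn: "x < n" and sn: "s < n" using S x less.prems by auto
  show ?case
  proof (cases "s = x")
    case True then show ?thesis by (intro exI[of _ 0]) simp
  next
    case False
    define d where "d = cwlen n x s"
    have d0: "0 < d" using cwlen_zero[OF xn sn] False d_def by auto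
    have dn: "d < n" using cwlen_lt[of n x s] xn d_def by simp
    have sx: "(x + d) mod n = s" using cwlen_add[OF xn sn] d_def by simp
    define K where "K = (LEAST k. 0 < k \<and> k \<le> n \<and> (s + n - k) mod n \<in> S)"
    note P = prev_props[OF S less.prems sn, folded K_def]
    have e: "\<And>k. k \<le> d \<Longrightarrow> (s + n - k) mod n = (x + (d - k)) mod n"
    proof -
      fix k assume k: "k \<le> d"
      have "(s + n - k) mod n = ((x + d) mod n + n - k) mod n" using sx by simp
      also have "\<dots> = (x + d + (n - k)) mod n" using k dn by (intro mod_sub_shift) simp
      also have "x + d + (n - k) = x + (d - k) + n" using k dn by simp
      finally show "(s + n - k) mod n = (x + (d - k)) mod n" by simp
    qed
    have Kd: "K \<le> d"
    proof (rule ccontr)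
      assume "\<not> K \<le> d"
      then have "(s + n - d) mod n \<notin> S" using P(4)[of d] d0 by simp
      then show False using e[of d] x xn by simp
    qed
    have p: "cw_prev n S s = (x + (d - K)) mod n" using P(5) e[OF Kd] by simp
    have lt: "cwlen n x (cw_prev n S s) < cwlen n x s"
      using p cwlen_of_add[OF xn, of "d - K"] dn P(1) Kd d_def by simp
    obtain j where j: "(cw_next n S ^^ j) x = cw_prev n S s"
      using less.hyps[OF lt] prev_in[OF S less.prems sn] by blast
    have "(cw_next n S ^^ Suc j) x = s" using j next_prev[OF S less.prems] by simp
    then show ?thesis by blast
  qed
qed

lemma next_inj:
  assumes S: "S \<subseteq> {..<n}" and a: "a \<in> S" and b: "b \<in> S" and e: "cw_next n S a = cw_next n S b"
  shows "a = b"
proof -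
  have "cw_prev n S (cw_next n S a) = cw_prev n S (cw_next n S b)" using e by (rule arg_cong)
  then show ?thesis unfolding prev_next[OF S a] prev_next[OF S b] .
qed

lemma funpow_in:
  assumes S: "S \<subseteq> {..<n}" and x: "x \<in> S"
  shows "(cw_next n S ^^ k) x \<in> S"
proof (induction k)
  case 0 then show ?case using x by simp
next
  case (Suc k)
  then show ?case using next_in[OF S x] S by auto
qed

lemma funpow_inj:
  assumes S: "S \<subseteq> {..<n}" and x: "x \<in> S" and y: "y \<in> S"
  shows "(cw_next n S ^^ k) x = (cw_next n S ^^ k) y \<Longrightarrow> x = y"
proof (induction k)
  case 0 then show ?case by simp
next
  case (Suc k)
  then show ?case using next_inj[OF S funpow_in[OF S x, of k] funpow_in[OF S y, of k]] by simp
qed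

lemma period:
  assumes S: "S \<subseteq> {..<n}" and x: "x \<in> S"
  shows "(cw_next n S ^^ card S) x = x"
proof -
  define f where "f = cw_next n S"
  define c where "c = card S"
  have fin: "finite S" using S finite_subset by blast
  have "\<not> inj_on (\<lambda>j. (f ^^ j) x) {0..c}"
  proof
    assume inj: "inj_on (\<lambda>j. (f ^^ j) x) {0..c}"
    have "(\<lambda>j. (f ^^ j) x) ` {0..c} \<subseteq> S" using funpow_in[OF S x] f_def by auto
    then have "card ((\<lambda>j. (f ^^ j) x) ` {0..c}) \<le> c" using fin c_def card_mono by blast
    then show False using card_image[OF inj] by simp
  qed
  then obtain i j where ij: "i \<in> {0..c}" "j \<in> {0..c}" "i \<noteq> j" "(f ^^ i) x = (f ^^ j) x"
    unfolding inj_on_def by blast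
  have "\<exists>i j. i < j \<and> j \<le> c \<and> (f ^^ i) x = (f ^^ j) x"
  proof (cases "i < j")
    case True then show ?thesis using ij by auto
  next
    case False then have "j < i" using ij(3) by simp
    then show ?thesis using ij by (intro exI[of _ j] exI[of _ i]) auto
  qed
  then obtain i j where ij: "i < j" "j \<le> c" "(f ^^ i) x = (f ^^ j) x" by blast
  define p where "p = j - i"
  have jp: "j = i + p" using ij p_def by simp
  have "(f ^^ i) x = (f ^^ i) ((f ^^ p) x)" using ij(3) unfolding jp funpow_add o_apply by simp
  then have px: "(f ^^ p) x = x" using funpow_inj[OF S x funpow_in[OF S x, of p], of i] unfolding f_def by simp
  have per: "\<And>k. (f ^^ k) x = (f ^^ (k mod p)) x"
  proof -
    fix k
    have m: "\<And>m. (f ^^ (p * m)) x = x"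
    proof -
      fix m show "(f ^^ (p * m)) x = x"
        by (induction m) (simp_all add: funpow_add px)
    qed
    have "(f ^^ k) x = (f ^^ (k mod p + p * (k div p))) x" by simp
    also have "\<dots> = (f ^^ (k mod p)) x" by (simp only: funpow_add o_apply m)
    finally show "(f ^^ k) x = (f ^^ (k mod p)) x" .
  qed
  have p0: "0 < p" using ij p_def by simp
  have "S \<subseteq> (\<lambda>k. (f ^^ k) x) ` {..<p}"
  proof
    fix s assume "s \<in> S"
    then obtain k where "(f ^^ k) x = s" using orbit[OF S x] f_def by blast
    then show "s \<in> (\<lambda>k. (f ^^ k) x) ` {..<p}" using per[of k] p0 by auto
  qed
  moreover have "card ((\<lambda>k. (f ^^ k) x) ` {..<p}) \<le> p" using card_image_le[of "{..<p}" "\<lambda>k. (f ^^ k) x"] by simp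
  ultimately have "c \<le> p" unfolding c_def using card_mono[of "(\<lambda>k. (f ^^ k) x) ` {..<p}" S] by simp
  then have "p = c" using ij p_def by simp
  then show ?thesis using px f_def c_def by simp
qed

lemma period_mod:
  assumes S: "S \<subseteq> {..<n}" and x: "x \<in> S" and e: "k mod card S = l mod card S"
  shows "(cw_next n S ^^ k) x = (cw_next n S ^^ l) x"
proof -
  define f where "f = cw_next n S"
  define c where "c = card S"
  have m: "\<And>m. (f ^^ (c * m)) x = x"
  proof -
    fix m show "(f ^^ (c * m)) x = x"
      by (induction m) (simp_all add: funpow_add period[OF S x, folded f_def c_def])
  qed
  have r: "\<And>k. (f ^^ k) x = (f ^^ (k mod c)) x"
  proof -
    fix k
    have "(f ^^ k) x = (f ^^ (k mod c + c * (k div c))) x" by simp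
    also have "\<dots> = (f ^^ (k mod c)) x" by (simp only: funpow_add o_apply m)
    finally show "(f ^^ k) x = (f ^^ (k mod c)) x" .
  qed
  show ?thesis using r[of k] r[of l] e f_def c_def by simp
qed


locale tri =
  fixes n :: nat and T :: "tarc set"
  assumes n4: "4 \<le> n" and tr: "triangulation n T" and ty: "typeI n T"
begin

abbreviation "A \<equiv> adj T"
abbreviation "nx \<equiv> cw_next n (adj T)"
abbreviation "pv \<equiv> cw_prev n (adj T)"
definition g where "g a = cwlen n a (nx a)"
definition cc where "cc a = (a + g a - 1) mod n"

lemma n0: "0 < n" using n4 by simp

lemma validT: "x \<in> T \<Longrightarrow> valid_arc n x" using tr unfolding triangulation_def by blast
lemma compatT: "x \<in> T \<Longrightarrow> y \<in> T \<Longrightarrow> compat n x y" using tr unfolding triangulation_def by blast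
lemma maxT: "valid_arc n x \<Longrightarrow> (\<forall>y\<in>T. compat n x y) \<Longrightarrow> x \<in> T" using tr unfolding triangulation_def by blast

lemma A_lt: "A \<subseteq> {..<n}"
  unfolding adj_def using validT by fastforce

lemma punct_sub: "{x\<in>T. is_punct x} \<subseteq> (\<Union>a\<in>A. {Pl a, Nt a})"
proof
  fix x assume "x \<in> {x\<in>T. is_punct x}"
  then show "x \<in> (\<Union>a\<in>A. {Pl a, Nt a})" by (cases x) (auto simp: adj_def)
qed

lemma notags: "\<not> (Pl a \<in> T \<and> Nt b \<in> T)"
proof
  assume h: "Pl a \<in> T \<and> Nt b \<in> T"
  then have ab: "a = b" using compatT[of "Pl a" "Nt b"] by simp
  show False
  proof (cases "card {x\<in>T. is_punct x} \<ge> 3")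
    case True
    have "{x\<in>T. is_punct x} \<subseteq> {Pl a, Nt a}"
    proof
      fix x assume x: "x \<in> {x\<in>T. is_punct x}"
      show "x \<in> {Pl a, Nt a}"
      proof (cases x)
        case (Bd q s) then show ?thesis using x by simp
      next
        case (Pl c) then show ?thesis using x h ab compatT[of x "Nt b"] by auto
      next
        case (Nt c) then show ?thesis using x h ab compatT[of x "Pl a"] by auto
      qed
    qed
    then have "card {x\<in>T. is_punct x} \<le> card {Pl a, Nt a}" by (intro card_mono) auto
    then have "card {x\<in>T. is_punct x} \<le> 2" by simp
    then show False using True by simp
  next
    case False
    then obtain q q' where "Pl q \<in> T" "Pl q' \<in> T" "q \<noteq> q'" using ty unfolding typeI_def by blast
    then show False using h compatT[of "Pl q" "Nt b"] compatT[of "Pl q'" "Nt b"] by simp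
  qed
qed

lemma two: "\<exists>a b. a \<in> A \<and> b \<in> A \<and> a \<noteq> b"
proof (rule ccontr)
  assume h: "\<not> ?thesis"
  show False
  proof (cases "card {x\<in>T. is_punct x} \<ge> 3")
    case True
    have "{x\<in>T. is_punct x} \<noteq> {}" using True by (intro notI) simp
    then obtain x where "x \<in> T" "is_punct x" by blast
    then obtain a where a: "a \<in> A" by (cases x) (auto simp: adj_def)
    then have "A = {a}" using h by blast
    then have "{x\<in>T. is_punct x} \<subseteq> {Pl a, Nt a}" using punct_sub by auto
    then have "card {x\<in>T. is_punct x} \<le> card {Pl a, Nt a}" by (intro card_mono) auto
    then have "card {x\<in>T. is_punct x} \<le> 2" by simp
    then show False using True by simp
  next
    case False
    then obtain q q' where "Pl q \<in> T" "Pl q' \<in> T" "q \<noteq> q'" using ty unfolding typeI_def by blast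
    then show False using h by (auto simp: adj_def)
  qed
qed

lemma gap_props:
  assumes a: "a \<in> A"
  shows "0 < g a" "g a < n" "nx a = (a + g a) mod n" "\<And>j. 0 < j \<Longrightarrow> j < g a \<Longrightarrow> (a + j) mod n \<notin> A"
    "nx a \<in> A"
proof -
  have an: "a < n" using a A_lt by auto
  define K where "K = (LEAST k. 0 < k \<and> (a + k) mod n \<in> A)"
  note P = next_props[OF A_lt a an, folded K_def]
  obtain b where b: "b \<in> A" "b \<noteq> a" using two by blast
  have bn: "b < n" using b A_lt by auto
  have Kn: "K < n"
  proof (rule ccontr)
    assume "\<not> K < n"
    then have "cwlen n a b < K" using cwlen_lt[of n a b] n0 by simp
    moreover have "0 < cwlen n a b" using cwlen_zero[OF an bn] b by simp
    ultimately have "(a + cwlen n a b) mod n \<notin> A" using P(4) by simp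
    then show False using cwlen_add[OF an bn] b by simp
  qed
  have gK: "g a = K" unfolding g_def using P(5) cwlen_of_add[OF an Kn] by simp
  show "0 < g a" "g a < n" "nx a = (a + g a) mod n" "\<And>j. 0 < j \<Longrightarrow> j < g a \<Longrightarrow> (a + j) mod n \<notin> A"
    "nx a \<in> A" using gK P Kn by auto
qed

lemma pv_nx: "a \<in> A \<Longrightarrow> pv (nx a) = a" using prev_next[OF A_lt] .
lemma nx_pv: "a \<in> A \<Longrightarrow> nx (pv a) = a" using next_prev[OF A_lt] .
lemma pv_in: "a \<in> A \<Longrightarrow> pv a \<in> A" using prev_in[OF A_lt] A_lt by auto
lemma nx_inj: "a \<in> A \<Longrightarrow> b \<in> A \<Longrightarrow> nx a = nx b \<Longrightarrow> a = b" using next_inj[OF A_lt] .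

lemma intE_iff: "a \<in> intE n T \<longleftrightarrow> a \<in> A \<and> 2 \<le> g a"
proof (cases "a \<in> A")
  case True
  have an: "a < n" using True A_lt by auto
  note G = gap_props[OF True]
  have "nx a = cw n a \<longleftrightarrow> g a = 1"
  proof
    assume "nx a = cw n a"
    then have "(a + g a) mod n = (a + 1) mod n" using G(3) unfolding cw_def by simp
    then show "g a = 1" using cwlen_of_add[OF an G(2)] cwlen_of_add[OF an, of 1] n4 by simp
  next
    assume "g a = 1" then show "nx a = cw n a" using G(3) unfolding cw_def by simp
  qed
  then show ?thesis using True G(1) unfolding intE_def by auto
next
  case False then show ?thesis unfolding intE_def by auto
qed

lemma intE_A: "intE n T \<subseteq> A" unfolding intE_def by auto
lemma RS_intE: "run_starts n T \<subseteq> intE n T" unfolding run_starts_def by auto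

lemma cw_in_A_g1: "a \<in> A \<Longrightarrow> cw n a \<in> A \<Longrightarrow> g a = 1"
  using gap_props[of a] unfolding cw_def by (metis One_nat_def less_one nat_neq_iff)

lemma cc_props:
  assumes a: "a \<in> A"
  shows "cc a < n" "cw n (cc a) = nx a" "cc a = ccw n (nx a)" "2 \<le> g a \<Longrightarrow> cc a \<notin> A"
    "g a = 1 \<Longrightarrow> cc a = a"
proof -
  note G = gap_props[OF a]
  have an: "a < n" using a A_lt by auto
  show "cc a < n" unfolding cc_def using n0 by simp
  show "cw n (cc a) = nx a" unfolding cc_def G(3) using cw_mod[OF n0] G(1) by simp
  have "ccw n (nx a) = ((a + g a) mod n + n - 1) mod n" unfolding G(3) ccw_def ..
  also have "\<dots> = (a + g a + (n - 1)) mod n" using n0 by (intro mod_sub_shift) simp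
  also have "a + g a + (n - 1) = (a + g a - 1) + n" using G(1) n0 by simp
  finally show "cc a = ccw n (nx a)" unfolding cc_def by simp
  show "2 \<le> g a \<Longrightarrow> cc a \<notin> A" unfolding cc_def using G(4)[of "g a - 1"] by simp
  show "g a = 1 \<Longrightarrow> cc a = a" unfolding cc_def using an by simp
qed

end


context tri begin

abbreviation "C \<equiv> colored n T"
abbreviation "R \<equiv> red n T"
abbreviation "B \<equiv> blue n T"
abbreviation "I \<equiv> intE n T"
abbreviation "RS \<equiv> run_starts n T"

lemma a_lt: "a \<in> A \<Longrightarrow> a < n" using A_lt by auto

lemma nx_ne: "a \<in> A \<Longrightarrow> nx a \<noteq> a"
  using gap_props[of a] cwlen_of_add[of a n "g a"] cwlen_zero[of a n a] a_lt by fastforce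

lemma in_T_A: "a \<in> A \<Longrightarrow> Pl a \<in> T \<or> Nt a \<in> T" unfolding adj_def by simp

lemma punct_A: "a \<in> A \<Longrightarrow> Bd q s \<in> T \<Longrightarrow> punct_compat n a q s"
  using in_T_A[of a] compatT[of "Bd q s" "Pl a"] compatT[of "Bd q s" "Nt a"] by auto

lemma BdT: assumes a: "a \<in> I" shows "Bd a (nx a) \<in> T"
proof (rule maxT)
  have aA: "a \<in> A" using a intE_A by auto
  note G = gap_props[OF aA]
  have an: "a < n" using a_lt aA by simp
  have nn: "nx a < n" using a_lt G(5) by simp
  show "valid_arc n (Bd a (nx a))" using a an nn nx_ne[OF aA] unfolding intE_def by auto
  show "\<forall>y\<in>T. compat n (Bd a (nx a)) y"
  proof
    fix y assume y: "y \<in> T"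
    show "compat n (Bd a (nx a)) y"
    proof (cases y)
      case (Bd q s)
      have v: "q < n" "s < n" "q \<noteq> s" using validT[OF y] Bd by auto
      show ?thesis using Bd geo[OF an nn v(1,2) nx_ne[OF aA, symmetric] v(3)]
          punct_A[OF aA y[unfolded Bd]] punct_A[OF G(5) y[unfolded Bd]] by (simp add: punct_compat_def)
    next
      case (Pl p)
      then have pA: "p \<in> A" using y unfolding adj_def by simp
      have "\<not> (0 < cwlen n a p \<and> cwlen n a p < g a)"
        using G(4)[of "cwlen n a p"] cwlen_add[OF an a_lt[OF pA]] pA by auto
      then show ?thesis using Pl by (simp add: punct_compat_def g_def)
    next
      case (Nt p)
      then have pA: "p \<in> A" using y unfolding adj_def by simp
      have "\<not> (0 < cwlen n a p \<and> cwlen n a p < g a)"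
        using G(4)[of "cwlen n a p"] cwlen_add[OF an a_lt[OF pA]] pA by auto
      then show ?thesis using Nt by (simp add: punct_compat_def g_def)
    qed
  qed
qed

lemma C_iff: "x \<in> C \<longleftrightarrow> x < n \<and> (x \<in> A \<or> cw n x \<in> A)" unfolding colored_def by simp
lemma C_lt: "C \<subseteq> {..<n}" using C_iff by auto
lemma R_C: "R \<subseteq> C" unfolding red_def by auto
lemma B_C: "B \<subseteq> C" unfolding blue_def by auto
lemma R_lt: "R \<subseteq> {..<n}" using R_C C_lt by auto
lemma B_lt: "B \<subseteq> {..<n}" using B_C C_lt by auto

lemma gapC: assumes a: "a \<in> A" "0 < j" "j + 1 < g a" shows "(a + j) mod n \<notin> C"
proof -
  note G = gap_props[OF a(1)]
  have "cw n ((a + j) mod n) = (a + (j + 1)) mod n" using cw_mod[OF n0] by (simp add: add.assoc)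
  then show ?thesis using G(4)[of j] G(4)[of "j+1"] a unfolding C_iff by auto
qed

lemma C_cases:
  assumes x: "x \<in> C" "x \<notin> A"
  shows "\<exists>a\<in>A. 2 \<le> g a \<and> x = cc a \<and> nx a = cw n x"
proof -
  have xn: "x < n" and cx: "cw n x \<in> A" using x C_iff by auto
  define a where "a = pv (cw n x)"
  have aA: "a \<in> A" using pv_in[OF cx] a_def by simp
  have na: "nx a = cw n x" using nx_pv[OF cx] a_def by simp
  have "cc a = x" using cc_props(3)[OF aA] na ccw_cw[OF xn] by simp
  moreover have "2 \<le> g a"
  proof (rule ccontr)
    assume "\<not> 2 \<le> g a"
    then have "g a = 1" using gap_props(1)[OF aA] by simp
    then have "cc a = a" using cc_props(5)[OF aA] by simp
    then show False using \<open>cc a = x\<close> x aA by simp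
  qed
  ultimately show ?thesis using aA na by blast
qed

lemma cc_C: "a \<in> A \<Longrightarrow> cc a \<in> C"
  using cc_props[of a] gap_props(5)[of a] C_iff by auto

lemma RLV_iff: "y \<in> run_last_vertices n T \<longleftrightarrow> (\<exists>p\<in>I. y = nx p \<and> nx p \<notin> I)"
  unfolding run_last_vertices_def by auto

lemma A_R: assumes a: "a \<in> A" shows "a \<in> R"
proof -
  have "cw n a \<notin> run_last_vertices n T"
  proof
    assume "cw n a \<in> run_last_vertices n T"
    then obtain p where p: "p \<in> I" "cw n a = nx p" "nx p \<notin> I" using RLV_iff by blast
    have pA: "p \<in> A" using p intE_A by auto
    have "cw n a \<in> A" using p gap_props(5)[OF pA] by simp
    then have "g a = 1" using cw_in_A_g1[OF a] by simp
    then have "nx a = cw n a" using gap_props(3)[OF a] unfolding cw_def by simp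
    then have "a = p" using nx_inj[OF a pA] p by simp
    then show False using p \<open>nx a = cw n a\<close> unfolding intE_def by simp
  qed
  then show ?thesis unfolding red_def using a C_iff a_lt by auto
qed

lemma cc_R: assumes a: "a \<in> I" shows "cc a \<in> R \<longleftrightarrow> nx a \<in> I"
proof -
  have aA: "a \<in> A" using a intE_A by auto
  have "cw n (cc a) \<in> run_last_vertices n T \<longleftrightarrow> nx a \<notin> I"
    unfolding cc_props(2)[OF aA] RLV_iff
    using a nx_inj[OF aA] intE_A by blast
  then show ?thesis unfolding red_def using cc_C[OF aA] by auto
qed

lemma A_B: "a \<in> A \<Longrightarrow> a \<in> B \<longleftrightarrow> a \<notin> RS"
  unfolding blue_def using C_iff a_lt by auto

lemma cc_B: assumes a: "a \<in> I" shows "cc a \<in> B"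
proof -
  have aA: "a \<in> A" using a intE_A by auto
  have "2 \<le> g a" using a intE_iff by simp
  then have "cc a \<notin> A" using cc_props(4)[OF aA] by simp
  then show ?thesis unfolding blue_def using cc_C[OF aA] RS_intE intE_A by auto
qed

lemma nx_RS: assumes a: "a \<in> A" shows "nx a \<in> RS \<longleftrightarrow> nx a \<in> I \<and> a \<notin> I"
  unfolding run_starts_def using pv_nx[OF a] by simp

end


context tri begin

definition phi where "phi x = (if x \<in> A then cc x else cw n x)"
abbreviation "fR \<equiv> cw_next n R"
abbreviation "fB \<equiv> cw_next n B"

lemma g1_nx: "a \<in> A \<Longrightarrow> g a = 1 \<Longrightarrow> nx a = (a + 1) mod n" using gap_props(3) by simp
lemma cc_off: "a \<in> A \<Longrightarrow> (a + (g a - 1)) mod n = cc a"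
  unfolding cc_def using gap_props(1)[of a] by simp
lemma I_A: "a \<in> I \<Longrightarrow> a \<in> A" using intE_A by auto
lemma I_g: "a \<in> I \<Longrightarrow> 2 \<le> g a" using intE_iff by simp
lemma notI_g: "a \<in> A \<Longrightarrow> a \<notin> I \<Longrightarrow> g a = 1" using intE_iff gap_props(1)[of a] by simp

lemma stepR1: assumes a: "a \<in> A" "g a = 1" shows "fR a = nx a"
proof -
  have "fR a = (a + 1) mod n"
    by (rule next_eqI) (use a A_R gap_props(5)[OF a(1)] g1_nx[OF a] in auto)
  then show ?thesis using g1_nx[OF a] by simp
qed

lemma stepR2a: assumes a: "a \<in> I" "nx a \<in> I" shows "fR a = cc a"
proof -
  have aA: "a \<in> A" using I_A a by simp
  have "fR a = (a + (g a - 1)) mod n"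
  proof (rule next_eqI)
    show "0 < g a - 1" using I_g[OF a(1)] by simp
    show "(a + (g a - 1)) mod n \<in> R" using cc_off[OF aA] cc_R[OF a(1)] a by simp
    fix j assume "0 < j" "j < g a - 1"
    then show "(a + j) mod n \<notin> R" using gapC[OF aA] R_C by auto
  qed
  then show ?thesis using cc_off[OF aA] by simp
qed

lemma stepR2b: assumes a: "a \<in> I" "nx a \<notin> I" shows "fR a = nx a"
proof -
  have aA: "a \<in> A" using I_A a by simp
  have "fR a = (a + g a) mod n"
  proof (rule next_eqI)
    show "0 < g a" using I_g[OF a(1)] by simp
    show "(a + g a) mod n \<in> R" using gap_props(3,5)[OF aA] A_R by simp
    fix j assume j: "0 < j" "j < g a"
    show "(a + j) mod n \<notin> R"
    proof (cases "j + 1 < g a")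
      case True then show ?thesis using gapC[OF aA j(1)] R_C by auto
    next
      case False then have "j = g a - 1" using j by simp
      then show ?thesis using cc_off[OF aA] cc_R[OF a(1)] a(2) by simp
    qed
  qed
  then show ?thesis using gap_props(3)[OF aA] by simp
qed

lemma stepR3: assumes a: "a \<in> I" shows "fR (cc a) = nx a"
proof -
  have aA: "a \<in> A" using I_A a by simp
  have "fR (cc a) = (cc a + 1) mod n"
    by (rule next_eqI) (use cc_props(2)[OF aA] gap_props(5)[OF aA] A_R in \<open>auto simp: cw_def\<close>)
  then show ?thesis using cc_props(2)[OF aA] by (simp add: cw_def)
qed

lemma stepB1: assumes a: "a \<in> A" "g a = 1" "nx a \<notin> I" shows "fB a = nx a"
proof -
  have "fB a = (a + 1) mod n"
    by (rule next_eqI) (use a A_B[OF gap_props(5)[OF a(1)]] RS_intE g1_nx[OF a(1,2)] in auto)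
  then show ?thesis using g1_nx[OF a(1,2)] by simp
qed

lemma stepB1': assumes a: "a \<in> A" "g a = 1" "nx a \<in> I" shows "fB a = cc (nx a)"
proof -
  define b where "b = nx a"
  have bA: "b \<in> A" using gap_props(5)[OF a(1)] b_def by simp
  have b1: "b = (a + 1) mod n" using g1_nx[OF a(1,2)] b_def by simp
  have off: "\<And>t. (b + t) mod n = (a + (1 + t)) mod n" using b1 by (simp add: mod_add_left_eq add.assoc)
  have aI: "a \<notin> I" using a(2) I_g by force
  have "fB a = (a + g b) mod n"
  proof (rule next_eqI)
    show "0 < g b" using gap_props(1)[OF bA] .
    show "(a + g b) mod n \<in> B" using cc_B[of b] a(3) b_def off[of "g b - 1"] cc_off[OF bA] I_g[of b] by simp
    fix j assume j: "0 < j" "j < g b"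
    show "(a + j) mod n \<notin> B"
    proof (cases "j = 1")
      case True
      have "b \<in> RS" using nx_RS[OF a(1)] a(3) aI b_def by simp
      then show ?thesis using True b1 A_B[OF bA] by simp
    next
      case False
      then have "(b + (j - 1)) mod n \<notin> C" using gapC[OF bA, of "j - 1"] j by simp
      then show ?thesis using off[of "j - 1"] False j B_C by auto
    qed
  qed
  also have "\<dots> = cc b" using off[of "g b - 1"] cc_off[OF bA] gap_props(1)[OF bA] by simp
  finally show ?thesis using b_def by simp
qed

lemma stepB2: assumes a: "a \<in> I" "nx a \<in> B" shows "fB (cc a) = nx a"
proof -
  have aA: "a \<in> A" using I_A a by simp
  have "fB (cc a) = (cc a + 1) mod n"
    by (rule next_eqI) (use cc_props(2)[OF aA] a in \<open>auto simp: cw_def\<close>)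
  then show ?thesis using cc_props(2)[OF aA] by (simp add: cw_def)
qed

lemma stepB3: assumes a: "a \<in> I" shows "fB a = cc a"
proof -
  have aA: "a \<in> A" using I_A a by simp
  have "fB a = (a + (g a - 1)) mod n"
  proof (rule next_eqI)
    show "0 < g a - 1" using I_g[OF a(1)] by simp
    show "(a + (g a - 1)) mod n \<in> B" using cc_off[OF aA] cc_B[OF a(1)] by simp
    fix j assume "0 < j" "j < g a - 1"
    then show "(a + j) mod n \<notin> B" using gapC[OF aA] B_C by auto
  qed
  then show ?thesis using cc_off[OF aA] by simp
qed

lemma comm: assumes x: "x \<in> R" shows "fB (phi x) = phi (fR x)"
proof (cases "x \<in> A")
  case xA: True
  show ?thesis
  proof (cases "x \<in> I")
    case False
    then have g1: "g x = 1" using notI_g xA by simp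
    have px: "phi x = x" using xA cc_props(5)[OF xA g1] unfolding phi_def by simp
    have nA: "nx x \<in> A" using gap_props(5)[OF xA] .
    show ?thesis
    proof (cases "nx x \<in> I")
      case True
      then show ?thesis using px stepR1[OF xA g1] stepB1'[OF xA g1 True] nA unfolding phi_def by simp
    next
      case False
      then show ?thesis using px stepR1[OF xA g1] stepB1[OF xA g1 False] nA notI_g[OF nA False]
          cc_props(5)[OF nA] unfolding phi_def by simp
    qed
  next
    case xI: True
    have px: "phi x = cc x" using xA unfolding phi_def by simp
    have nA: "nx x \<in> A" using gap_props(5)[OF xA] .
    show ?thesis
    proof (cases "nx x \<in> I")
      case True
      have "nx x \<in> B" using A_B[OF nA] nx_RS[OF xA] xI by simp
      then show ?thesis using px stepR2a[OF xI True] stepB2[OF xI] cc_props(2,4)[OF xA] I_g[OF xI]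
        unfolding phi_def by simp
    next
      case False
      have "nx x \<in> B" using A_B[OF nA] RS_intE False by auto
      then show ?thesis using px stepR2b[OF xI False] stepB2[OF xI] notI_g[OF nA False]
          cc_props(5)[OF nA] nA unfolding phi_def by simp
    qed
  qed
next
  case False
  obtain a where a: "a \<in> A" "2 \<le> g a" "x = cc a" "nx a = cw n x" using C_cases[OF _ False] x R_C by blast
  have aI: "a \<in> I" using a intE_iff by simp
  have nI: "nx a \<in> I" using cc_R[OF aI] x a by simp
  show ?thesis using stepR3[OF aI] a False stepB3[OF nI] I_A[OF nI] unfolding phi_def by simp
qed

end


definition PM :: "nat \<Rightarrow> tarc set \<Rightarrow> nat \<Rightarrow> nat \<Rightarrow> tarc option" where
  "PM n T x y = (if x \<noteq> y then (if y = cw n x then None else Mmod T (Bd x y))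
      else (if Pl x \<in> T then Mmod T (Nt x) else Mmod T (Pl x)))"

lemma Mrb_PM: "Mrb n T rl bl i j = PM n T (rl i) (bl j)"
  unfolding Mrb_def PM_def Let_def ..

context tri begin

lemma cw_ne: "x < n \<Longrightarrow> cw n x \<noteq> x"
  unfolding cw_def using n4 by (cases "Suc x = n") auto

lemma tauP: assumes b: "b \<in> I" shows "projective_mod n T (PM n T (ccw n b) (cc b))"
proof -
  have bA: "b \<in> A" using I_A b by simp
  have bn: "b < n" "nx b < n" using a_lt bA gap_props(5)[OF bA] by auto
  have ne: "ccw n b \<noteq> cc b" using cc_props(3)[OF bA] ccw_inj[OF bn] nx_ne[OF bA] by metis
  have ne2: "cc b \<noteq> cw n (ccw n b)" using cw_ccw[OF bn(1)] cc_props(4)[OF bA] I_g[OF b] bA by auto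
  have e: "PM n T (ccw n b) (cc b) = Mmod T (Bd (ccw n b) (cc b))" using ne ne2 unfolding PM_def by simp
  show ?thesis
  proof (cases "Bd (ccw n b) (cc b) \<in> T")
    case True then show ?thesis using e unfolding projective_mod_def Mmod_def by simp
  next
    case False
    have "tau_inv_arc n (Bd b (nx b)) = Bd (ccw n b) (cc b)" using cc_props(3)[OF bA] by simp
    then show ?thesis using e False BdT[OF b] unfolding projective_mod_def Mmod_def by force
  qed
qed

lemma projA: assumes x: "x \<in> R" shows "projective_mod n T (PM n T x (fB (phi x)))"
proof (cases "x \<in> A")
  case xA: True
  have xn: "x < n" using a_lt xA by simp
  have nA: "nx x \<in> A" using gap_props(5)[OF xA] .
  show ?thesis
  proof (cases "x \<in> I")
    case False
    then have g1: "g x = 1" using notI_g xA by simp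
    have px: "phi x = x" using xA cc_props(5)[OF xA g1] unfolding phi_def by simp
    have nxcw: "nx x = cw n x" using g1_nx[OF xA g1] unfolding cw_def by simp
    show ?thesis
    proof (cases "nx x \<in> I")
      case True
      have "ccw n (nx x) = x" using nxcw ccw_cw[OF xn] by simp
      then show ?thesis using tauP[OF True] px stepB1'[OF xA g1 True] by simp
    next
      case False
      then show ?thesis using px stepB1[OF xA g1 False] nxcw cw_ne[OF xn]
        unfolding PM_def projective_mod_def by simp
    qed
  next
    case xI: True
    have px: "phi x = cc x" using xA unfolding phi_def by simp
    have "nx x \<in> B"
    proof (cases "nx x \<in> I")
      case True then show ?thesis using A_B[OF nA] nx_RS[OF xA] xI by simp
    next
      case False then show ?thesis using A_B[OF nA] RS_intE by auto
    qed
    then have "fB (phi x) = nx x" using px stepB2[OF xI] by simp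
    moreover have "nx x \<noteq> x" "nx x \<noteq> cw n x" using nx_ne[OF xA] xI unfolding intE_def by auto
    ultimately show ?thesis using BdT[OF xI] unfolding PM_def projective_mod_def Mmod_def by simp
  qed
next
  case False
  obtain a where a: "a \<in> A" "2 \<le> g a" "x = cc a" "nx a = cw n x" using C_cases[OF _ False] x R_C by blast
  have aI: "a \<in> I" using a intE_iff by simp
  have nI: "nx a \<in> I" using cc_R[OF aI] x a by simp
  have "fB (phi x) = cc (nx a)" using False a stepB3[OF nI] unfolding phi_def by simp
  moreover have "x = ccw n (nx a)" using a cc_props(3) by simp
  ultimately show ?thesis using tauP[OF nI] by simp
qed

lemma projB: assumes x: "x \<in> R"
  shows "projective_mod n T (PM n T x (phi x))
     \<or> (\<exists>q\<in>I. Bd q (nx q) \<in> T \<and> PM n T x (phi x) = Mmod T (Bd q (ccw n (nx q))))"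
proof (cases "x \<in> A")
  case xA: True
  have xn: "x < n" using a_lt xA by simp
  have nA: "nx x \<in> A" using gap_props(5)[OF xA] .
  show ?thesis
  proof (cases "x \<in> I")
    case False
    then have g1: "g x = 1" using notI_g xA by simp
    have px: "phi x = x" using xA cc_props(5)[OF xA g1] unfolding phi_def by simp
    have nxcw: "nx x = cw n x" using g1_nx[OF xA g1] unfolding cw_def by simp
    have cA: "cw n x \<in> A" using nxcw nA by simp
    have "projective_mod n T (PM n T x x)"
    proof (cases "Pl x \<in> T")
      case True
      have "Pl (cw n x) \<in> T" using in_T_A[OF cA] notags True by blast
      moreover have "tau_inv_arc n (Pl (cw n x)) = Nt x" using ccw_cw[OF xn] by simp
      moreover have "Nt x \<notin> T" using notags True by blast
      ultimately show ?thesis using True unfolding PM_def projective_mod_def Mmod_def by force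
    next
      case False
      have "Nt x \<in> T" using in_T_A[OF xA] False by simp
      then have "Nt (cw n x) \<in> T" using in_T_A[OF cA] notags by blast
      moreover have "tau_inv_arc n (Nt (cw n x)) = Pl x" using ccw_cw[OF xn] by simp
      ultimately show ?thesis using False unfolding PM_def projective_mod_def Mmod_def by force
    qed
    then show ?thesis using px by simp
  next
    case xI: True
    have px: "phi x = cc x" using xA unfolding phi_def by simp
    have ne: "cc x \<noteq> x" using cc_props(4)[OF xA] I_g[OF xI] xA by auto
    show ?thesis
    proof (cases "cc x = cw n x")
      case True then show ?thesis using px ne unfolding PM_def projective_mod_def by simp
    next
      case False
      then have "PM n T x (phi x) = Mmod T (Bd x (ccw n (nx x)))" using px ne cc_props(3)[OF xA]
        unfolding PM_def by simp
      then show ?thesis using xI BdT[OF xI] by blast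
    qed
  qed
next
  case False
  have xn: "x < n" using x R_lt by auto
  have "phi x = cw n x" using False unfolding phi_def by simp
  then show ?thesis using cw_ne[OF xn] unfolding PM_def projective_mod_def by simp
qed

end


context tri begin

lemma fin_A: "finite A" using A_lt finite_subset by blast

lemma B_eq: "B = (A - RS) \<union> cc ` I"
proof
  show "B \<subseteq> (A - RS) \<union> cc ` I"
  proof
    fix x assume x: "x \<in> B"
    then have xC: "x \<in> C" and xR: "x \<notin> RS" unfolding blue_def by auto
    show "x \<in> (A - RS) \<union> cc ` I"
    proof (cases "x \<in> A")
      case True then show ?thesis using xR by simp
    next
      case False
      obtain a where a: "a \<in> A" "2 \<le> g a" "x = cc a" using C_cases[OF xC False] by blast
      then have "a \<in> I" using intE_iff by simp
      then show ?thesis using a by simp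
    qed
  qed
  show "(A - RS) \<union> cc ` I \<subseteq> B"
  proof
    fix x assume "x \<in> (A - RS) \<union> cc ` I"
    then show "x \<in> B"
    proof
      assume "x \<in> A - RS" then show ?thesis using A_B[of x] by simp
    next
      assume "x \<in> cc ` I"
      then obtain a where "a \<in> I" "x = cc a" by blast
      then show ?thesis using cc_B by simp
    qed
  qed
qed

lemma card_B: "card B = NN n T"
proof -
  have fI: "finite I" using fin_A intE_A finite_subset by blast
  have fRS: "finite RS" using fI RS_intE finite_subset by blast
  have disj: "(A - RS) \<inter> cc ` I = {}"
  proof -
    { fix a assume "a \<in> I"
      then have "cc a \<notin> A" using cc_props(4)[OF I_A] I_g by simp }
    then show ?thesis by blast
  qed
  have inj: "inj_on cc I"
  proof
    fix a b assume a: "a \<in> I" and b: "b \<in> I" and e: "cc a = cc b"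
    have aA: "a \<in> A" and bA: "b \<in> A" using a b I_A by auto
    have "ccw n (nx a) = ccw n (nx b)" using e cc_props(3)[OF aA] cc_props(3)[OF bA] by simp
    then have "nx a = nx b" using ccw_inj a_lt[OF gap_props(5)[OF aA]] a_lt[OF gap_props(5)[OF bA]] by blast
    then show "a = b" using nx_inj[OF aA bA] by simp
  qed
  have "card B = card (A - RS) + card (cc ` I)"
    unfolding B_eq using disj fin_A fI by (intro card_Un_disjoint) auto
  also have "card (cc ` I) = card I" using card_image[OF inj] .
  also have "card (A - RS) = card A - card RS"
    using card_Diff_subset[OF fRS] RS_intE intE_A by blast
  finally have cB: "card B = card A - card RS + card I" .
  have le1: "card RS \<le> card I" using card_mono[OF fI RS_intE] .
  have le2: "card I \<le> card A" using card_mono[OF fin_A intE_A] .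
  show ?thesis
  proof (cases "I = A")
    case True
    have "RS = {}"
    proof -
      { fix p assume p: "p \<in> RS"
        then have "p \<in> A" "pv p \<notin> I" using RS_intE intE_A unfolding run_starts_def by auto
        then have False using pv_in True by simp }
      then show ?thesis by blast
    qed
    then show ?thesis using cB True unfolding NN_def dval_def by simp
  next
    case False
    then show ?thesis using cB le1 le2 unfolding NN_def dval_def by simp
  qed
qed

lemma main:
  assumes L: "labelling n T rl bl" and i: "i \<in> {1..NN n T}"
  shows "projective_mod n T (Mrb n T rl bl i (i mod NN n T + 1))
       \<and> (projective_mod n T (Mrb n T rl bl i i)
          \<or> (\<exists>q\<in>intE n T. Bd q (cw_next n (adj T) q) \<in> T
               \<and> Mrb n T rl bl i i = Mmod T (Bd q (ccw n (cw_next n (adj T) q)))))"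
proof -
  define N where "N = NN n T"
  have "\<exists>rs bs kb. (\<forall>j\<in>{1..N}. rl j = (fR ^^ ((j + N - 1) mod N)) rs \<and> bl j = (fB ^^ ((j + N - kb) mod N)) bs)
        \<and> (if I = {} then rs = bs \<and> rs \<in> R \<inter> B \<and> kb = 1
           else if I = A then rs = bs \<and> rs \<in> R \<inter> B \<and> kb = N
           else (\<exists>q\<in>RS. rs = ccw n q \<and> bs = ccw n q \<and> kb = 1))"
    using L unfolding labelling_def Let_def N_def .
  then obtain rs bs kb where
    H1: "\<forall>j\<in>{1..N}. rl j = (fR ^^ ((j + N - 1) mod N)) rs \<and> bl j = (fB ^^ ((j + N - kb) mod N)) bs"
    and H2: "if I = {} then rs = bs \<and> rs \<in> R \<inter> B \<and> kb = 1
           else if I = A then rs = bs \<and> rs \<in> R \<inter> B \<and> kb = N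
           else (\<exists>q\<in>RS. rs = ccw n q \<and> bs = ccw n q \<and> kb = 1)"
    by (elim exE conjE)
  have "\<exists>c0. rs \<in> R \<and> bs \<in> B \<and> phi rs = (fB ^^ c0) bs \<and> (\<forall>j\<in>{1..N}. (j + N - kb) mod N = (j - 1 + c0) mod N)"
  proof (cases "I = {}")
    case True
    then have h: "rs = bs" "rs \<in> R" "rs \<in> B" "kb = 1" using H2 by auto
    have rA: "rs \<in> A"
    proof (rule ccontr)
      assume "rs \<notin> A"
      then obtain a where "a \<in> A" "2 \<le> g a" using C_cases h R_C by blast
      then show False using True intE_iff by auto
    qed
    have "phi rs = rs" using rA notI_g[OF rA] True cc_props(5)[OF rA] unfolding phi_def by simp
    moreover have "\<forall>j\<in>{1..N}. (j + N - kb) mod N = (j - 1 + 0) mod N"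
    proof
      fix j assume "j \<in> {1..N}"
      then have "j + N - kb = (j - 1) + N" using h by simp
      then show "(j + N - kb) mod N = (j - 1 + 0) mod N" by simp
    qed
    ultimately show ?thesis using h by (intro exI[of _ 0]) simp
  next
    case ne: False
    show ?thesis
    proof (cases "I = A")
      case True
      then have h: "rs = bs" "rs \<in> R" "rs \<in> B" "kb = N" using H2 ne by auto
      have "phi rs = fB rs"
      proof (cases "rs \<in> A")
        case True
        then show ?thesis using stepB3[of rs] \<open>I = A\<close> unfolding phi_def by simp
      next
        case False
        obtain a where a: "a \<in> A" "2 \<le> g a" "rs = cc a" "nx a = cw n rs" using C_cases[OF _ False] h R_C by blast
        have aI: "a \<in> I" using a intE_iff by simp
        have "nx a \<in> B" using A_B[OF gap_props(5)[OF a(1)]] nx_RS[OF a(1)] aI by simp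
        then show ?thesis using stepB2[OF aI] a False unfolding phi_def by simp
      qed
      moreover have "\<forall>j\<in>{1..N}. (j + N - kb) mod N = (j - 1 + 1) mod N" using h by auto
      ultimately show ?thesis using h by (intro exI[of _ 1]) simp
    next
      case False
      then obtain q where q: "q \<in> RS" "rs = ccw n q" "bs = ccw n q" "kb = 1" using H2 ne by auto
      have qI: "q \<in> I" and qA: "q \<in> A" using q RS_intE intE_A by auto
      define p where "p = pv q"
      have pA: "p \<in> A" using pv_in[OF qA] p_def by simp
      have pI: "p \<notin> I" using q(1) p_def unfolding run_starts_def by simp
      have g1: "g p = 1" using notI_g[OF pA pI] .
      have "q = cw n p" using nx_pv[OF qA] g1_nx[OF pA g1] p_def unfolding cw_def by simp
      then have rp: "rs = p" "bs = p" using q ccw_cw a_lt[OF pA] by auto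
      have "p \<in> B" using A_B[OF pA] pI RS_intE by auto
      moreover have "phi p = p" using pA cc_props(5)[OF pA g1] unfolding phi_def by simp
      moreover have "\<forall>j\<in>{1..N}. (j + N - kb) mod N = (j - 1 + 0) mod N"
      proof
        fix j assume "j \<in> {1..N}"
        then have "j + N - kb = (j - 1) + N" using q by simp
        then show "(j + N - kb) mod N = (j - 1 + 0) mod N" by simp
      qed
      ultimately show ?thesis using rp A_R[OF pA] by (intro exI[of _ 0]) simp
    qed
  qed
  then obtain c0 where rs: "rs \<in> R" and bs: "bs \<in> B" and ph: "phi rs = (fB ^^ c0) bs"
    and kbm: "\<forall>j\<in>{1..N}. (j + N - kb) mod N = (j - 1 + c0) mod N" by blast
  have it: "\<And>k. (fR ^^ k) rs \<in> R \<and> phi ((fR ^^ k) rs) = (fB ^^ (k + c0)) bs"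
  proof -
    fix k show "(fR ^^ k) rs \<in> R \<and> phi ((fR ^^ k) rs) = (fB ^^ (k + c0)) bs"
    proof (induction k)
      case 0 then show ?case using rs ph by simp
    next
      case (Suc k)
      then have xk: "(fR ^^ k) rs \<in> R" and e1: "phi ((fR ^^ k) rs) = (fB ^^ (k + c0)) bs" by auto
      have xn: "(fR ^^ k) rs < n" using xk R_lt by auto
      have m: "fR ((fR ^^ k) rs) \<in> R" by (rule next_in[OF R_lt xk xn])
      have c: "fB (phi ((fR ^^ k) rs)) = phi (fR ((fR ^^ k) rs))" by (rule comm[OF xk])
      have c2: "phi (fR ((fR ^^ k) rs)) = fB ((fB ^^ (k + c0)) bs)" using c unfolding e1 by (rule sym)
      show ?case unfolding add_Suc funpow.simps(2) o_apply using m c2 by (rule conjI)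
    qed
  qed
  have cN: "card B = N" using card_B N_def by simp
  have i1: "1 \<le> i" "i \<le> N" using i N_def by auto
  define x where "x = (fR ^^ (i - 1)) rs"
  have "(i + N - 1) mod N = i - 1" using i1 by (simp add: mod_if)
  then have rl: "rl i = x" using H1 i1 x_def by auto
  have xR: "x \<in> R" using it x_def by simp
  have bli: "bl i = phi x"
  proof -
    have "bl i = (fB ^^ ((i + N - kb) mod N)) bs" using H1 i1 by auto
    also have "\<dots> = (fB ^^ (i - 1 + c0)) bs"
    proof (rule period_mod[OF B_lt bs])
      have "(i + N - kb) mod N = (i - 1 + c0) mod N" using kbm i1 by auto
      then show "(i + N - kb) mod N mod card B = (i - 1 + c0) mod card B" unfolding cN by simp
    qed
    finally show ?thesis using it[of "i - 1"] x_def by simp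
  qed
  have bli2: "bl (i mod N + 1) = fB (phi x)"
  proof -
    have j: "i mod N + 1 \<in> {1..N}" using i1 by (simp add: Suc_leI)
    have "bl (i mod N + 1) = (fB ^^ ((i mod N + 1 + N - kb) mod N)) bs" using H1 j by blast
    also have "\<dots> = (fB ^^ (Suc (i - 1 + c0))) bs"
    proof (rule period_mod[OF B_lt bs])
      have "(i mod N + 1 + N - kb) mod N = (i mod N + 1 - 1 + c0) mod N" using kbm j by blast
      also have "\<dots> = (i mod N + c0) mod N" by simp
      also have "\<dots> = (i + c0) mod N" by (simp add: mod_add_left_eq)
      also have "i + c0 = Suc (i - 1 + c0)" using i1 by simp
      finally show "(i mod N + 1 + N - kb) mod N mod card B = Suc (i - 1 + c0) mod card B" unfolding cN by simp
    qed
    also have "\<dots> = fB ((fB ^^ (i - 1 + c0)) bs)" by simp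
    finally show ?thesis using it[of "i - 1"] x_def by simp
  qed
  show ?thesis
    unfolding Mrb_PM rl bli bli2 N_def[symmetric] using projA[OF xR] projB[OF xR] by simp
qed

end


theorem lemma5p6:
  fixes n :: nat and T :: "tarc set" and rl bl :: "nat \<Rightarrow> nat" and i :: nat
  assumes "n \<ge> 4"
    and "triangulation n T"
    and "typeI n T"
    and "labelling n T rl bl"
    and "i \<in> {1..NN n T}"
  shows "projective_mod n T (Mrb n T rl bl i (i mod NN n T + 1))
       \<and> (projective_mod n T (Mrb n T rl bl i i)
          \<or> (\<exists>q\<in>intE n T. Bd q (cw_next n (adj T) q) \<in> T
               \<and> Mrb n T rl bl i i = Mmod T (Bd q (ccw n (cw_next n (adj T) q)))))"
proof -
  interpret tri n T using assms(1-3) by unfold_locales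
  show ?thesis using main[OF assms(4,5)] .
qed

end
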